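(* Let $p$ be an odd prime and let $m,r$ be positive integers with $p\nmid m$ and $r<m$. Then for every integer $s$ with $0\le s\le\langle -\frac{m-r}{m}\rangle_p$, $$\sum_{k=0}^{p-s-1}\frac{(q^r;q^m)_k\,(q^{m-r};q^m)_{k+s}}{(q^m;q^m)_k\,(q^m;q^m)_{k+s}}\equiv(-1)^{\langle -\frac{r}{m}\rangle_p}\,q^{-\frac{m\langle -\frac{r}{m}\rangle_p(\langle -\frac{r}{m}\rangle_p+1)}{2}}\pmod{[p]}.$$ In particular, if moreover $p\equiv\pm1\pmod m$, then $$\sum_{k=0}^{p-s-1}\frac{(q^r;q^m)_k\,(q^{m-r};q^m)_{k+s}}{(q^m;q^m)_k\,(q^m;q^m)_{k+s}}\equiv(-1)^{\langle -\frac{r}{m}\rangle_p}\,q^{\frac{r(m-r)(1-p^2)}{2m}}\pmod{[p]}.$$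
   Context: For an indeterminate $q$ and an integer $n\ge 0$: $(a;q)_0=1$ and $(a;q)_n=(1-a)(1-aq)\cdots(1-aq^{n-1})$. For a positive integer $p$, $[p]=\frac{1-q^p}{1-q}=1+q+\cdots+q^{p-1}$. For a prime $p$, $[p]$ is irreducible in $\mathbb{Q}[q]$; for rational functions $A,B$ of $q$ whose denominators are coprime to $[p]$, $A\equiv B\pmod{[p]^r}$ means that $A-B$, written in lowest terms, has numerator divisible by $[p]^r$ in $\mathbb{Q}[q]$. For a prime $p$ and a $p$-adic integer $x$ (e.g. a rational number whose denominator is not divisible by $p$), $\langle x\rangle_p$ denotes the least nonnegative residue of $x$ modulo $p$, i.e. the unique integer in $\{0,1,\dots,p-1\}$ congruent to $x$ modulo $p$. *)

theory Defs
  imports "HOL-Computational_Algebra.Computational_Algebra"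
          "HOL-Computational_Algebra.Normalized_Fraction" "HOL-Computational_Algebra.Field_as_Ring"
begin

type_synonym ratfun = "rat poly fract"

definition qvar :: ratfun where
  "qvar = to_fract [:0, 1:]"

definition qpoch :: "'a::comm_ring_1 \<Rightarrow> 'a \<Rightarrow> nat \<Rightarrow> 'a" where
  "qpoch a x n = (\<Prod>i<n. 1 - a * x ^ i)"

definition qint :: "nat \<Rightarrow> rat poly" where
  "qint n = (\<Sum>i<n. monom 1 i)"

definition num_rf :: "ratfun \<Rightarrow> rat poly" where
  "num_rf A = fst (quot_of_fract A)"
definition den_rf :: "ratfun \<Rightarrow> rat poly" where
  "den_rf A = snd (quot_of_fract A)"

definition qcong :: "ratfun \<Rightarrow> ratfun \<Rightarrow> rat poly \<Rightarrow> nat \<Rightarrow> bool" where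
  "qcong A B P e \<longleftrightarrow> coprime (den_rf A) P \<and> coprime (den_rf B) P \<and>
                      P ^ e dvd num_rf (A - B)"

definition lnr :: "nat \<Rightarrow> rat \<Rightarrow> nat" where
  "lnr p x = (THE a. a < p \<and>
      int p dvd (int a * snd (quotient_of x) - fst (quotient_of x)))"

end

theory Submission
  imports Defs
begin


definition ev :: "complex \<Rightarrow> rat poly \<Rightarrow> complex" where
  "ev z f = poly (map_poly of_rat f) z"

lemma map_poly_of_rat_add: "map_poly (of_rat::rat\<Rightarrow>complex) (f + g) = map_poly of_rat f + map_poly of_rat g"
  by (rule poly_eqI) (simp add: coeff_map_poly of_rat_add)

lemma map_poly_of_rat_mult: "map_poly (of_rat::rat\<Rightarrow>complex) (f * g) = map_poly of_rat f * map_poly of_rat g"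
  by (rule poly_eqI) (simp add: coeff_map_poly coeff_mult of_rat_sum of_rat_mult)

lemma map_poly_of_rat_minus: "map_poly (of_rat::rat\<Rightarrow>complex) (- f) = - map_poly of_rat f"
  by (rule poly_eqI) (simp add: coeff_map_poly of_rat_minus)

lemma ev_add [simp]: "ev z (f + g) = ev z f + ev z g"
  by (simp add: ev_def map_poly_of_rat_add)
lemma ev_mult [simp]: "ev z (f * g) = ev z f * ev z g"
  by (simp add: ev_def map_poly_of_rat_mult)
lemma ev_minus [simp]: "ev z (- f) = - ev z f"
  by (simp add: ev_def map_poly_of_rat_minus)
lemma ev_diff [simp]: "ev z (f - g) = ev z f - ev z g"
  using ev_add[of z f "-g"] by simp
lemma ev_1 [simp]: "ev z 1 = 1" by (simp add: ev_def)
lemma ev_0 [simp]: "ev z 0 = 0" by (simp add: ev_def)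
lemma ev_x [simp]: "ev z [:0,1:] = z" by (simp add: ev_def map_poly_pCons)
lemma ev_monom [simp]: "ev z (monom 1 i) = z ^ i"
  by (simp add: ev_def map_poly_monom poly_monom)
lemma ev_sum: "ev z (sum f A) = (\<Sum>i\<in>A. ev z (f i))"
  by (induction A rule: infinite_finite_induct) auto
lemma ev_pow [simp]: "ev z (f ^ n) = ev z f ^ n"
  by (induction n) auto

lemma ev_qint: "ev z (qint p) = (\<Sum>i<p. z ^ i)"
  by (simp add: qint_def ev_sum)

lemma qint_root:
  assumes "ev z (qint p) = 0" "p > 0"
  shows "z ^ p = 1 \<and> z \<noteq> 1"
proof -
  have "(z - 1) * (\<Sum>i<p. z ^ i) = z ^ p - 1"
    by (induction p) (auto simp: algebra_simps)
  with assms have "z ^ p = 1" by (simp add: ev_qint)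
  moreover have "z \<noteq> 1" using assms by (auto simp: ev_qint)
  ultimately show ?thesis by simp
qed

lemma root_qint:
  assumes "z ^ p = 1" "z \<noteq> 1"
  shows "ev z (qint p) = 0"
proof -
  have "(z - 1) * (\<Sum>i<p. z ^ i) = z ^ p - 1"
    by (induction p) (auto simp: algebra_simps)
  with assms show ?thesis by (simp add: ev_qint)
qed

lemma degree_qint: "p > 0 \<Longrightarrow> degree (qint p) = p - 1"
proof (induction p)
  case 0 then show ?case by simp
next
  case (Suc n)
  show ?case
  proof (cases "n = 0")
    case True then show ?thesis by (simp add: qint_def)
  next
    case False
    have "qint (Suc n) = qint n + monom 1 n" by (simp add: qint_def)
    moreover have "degree (qint n) < degree (monom (1::rat) n)" using Suc False by (simp add: degree_monom_eq)
    ultimately show ?thesis using False by (simp add: degree_add_eq_right degree_monom_eq)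
  qed
qed

lemma qint_nz: "p > 0 \<Longrightarrow> qint p \<noteq> 0"
proof
  assume "p > 0" "qint p = 0"
  hence "ev 1 (qint p) = 0" by simp
  moreover have "ev 1 (qint p) = of_nat p" by (simp add: ev_qint)
  ultimately show False using \<open>p > 0\<close> by simp
qed

lemma qint_dvd:
  assumes "p > 0" "\<And>z. z ^ p = 1 \<Longrightarrow> z \<noteq> 1 \<Longrightarrow> ev z f = 0"
  shows "qint p dvd f"
proof -
  define r where "r = f mod qint p"
  have fr: "f = qint p * (f div qint p) + r" by (simp add: r_def)
  have rz: "ev z r = 0" if "z ^ p = 1" "z \<noteq> 1" for z
    using assms(2)[OF that] root_qint[OF that] fr by (metis add_0 ev_add ev_mult mult_zero_left)
  show ?thesis
  proof (rule ccontr)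
    assume "\<not> ?thesis"
    hence r0: "r \<noteq> 0" by (simp add: r_def mod_eq_0_iff_dvd)
    hence mr0: "map_poly (of_rat::rat\<Rightarrow>complex) r \<noteq> 0" by (simp add: map_poly_eq_0_iff)
    have dr: "degree r < p - 1"
      using degree_mod_less[of "qint p" f] r0 qint_nz[OF assms(1)] degree_qint[OF assms(1)]
      by (simp add: r_def)
    have "{z::complex. z ^ p = 1} - {1} \<subseteq> {z. poly (map_poly (of_rat::rat\<Rightarrow>complex) r) z = 0}"
      using rz by (auto simp: ev_def)
    hence "card ({z::complex. z ^ p = 1} - {1}) \<le> card {z. poly (map_poly (of_rat::rat\<Rightarrow>complex) r) z = 0}"
      by (intro card_mono poly_roots_finite mr0)
    also have "\<dots> \<le> degree (map_poly (of_rat::rat\<Rightarrow>complex) r)" by (rule card_poly_roots_bound[OF mr0])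
    also have "\<dots> = degree r" by (rule degree_map_poly) simp
    finally have "card ({z::complex. z ^ p = 1} - {1}) < p - 1" using dr by simp
    moreover have "card ({z::complex. z ^ p = 1} - {1}) = p - 1"
      using card_roots_unity_eq[OF assms(1)] finite_roots_unity[of p] assms(1)
      by (subst card_Diff_singleton) auto
    ultimately show False by simp
  qed
qed

lemma qint_coprime:
  assumes "p > 0" "\<And>z. z ^ p = 1 \<Longrightarrow> z \<noteq> 1 \<Longrightarrow> ev z g \<noteq> 0"
  shows "coprime g (qint p)"
proof (rule coprimeI)
  fix c assume cg: "c dvd g" and cq: "c dvd qint p"
  have c0: "c \<noteq> 0" using cq qint_nz[OF assms(1)] by auto
  show "is_unit c"
  proof (cases "degree c = 0")
    case True then show ?thesis using c0 by (simp add: is_unit_iff_degree)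
  next
    case False
    have "degree (map_poly (of_rat::rat\<Rightarrow>complex) c) \<noteq> 0"
      using False by (subst degree_map_poly) auto
    hence "\<not> constant (poly (map_poly (of_rat::rat\<Rightarrow>complex) c))"
      by (simp add: constant_degree)
    then obtain z where z: "poly (map_poly (of_rat::rat\<Rightarrow>complex) c) z = 0"
      using fundamental_theorem_of_algebra by blast
    hence evc: "ev z c = 0" by (simp add: ev_def)
    from cq obtain k where "qint p = c * k" by (auto elim: dvdE)
    hence "ev z (qint p) = 0" using evc by simp
    from qint_root[OF this assms(1)] have "z ^ p = 1" "z \<noteq> 1" by auto
    moreover from cg obtain k' where "g = c * k'" by (auto elim: dvdE)
    hence "ev z g = 0" using evc by simp
    ultimately show ?thesis using assms(2) by blast
  qed
qed

definition RV :: "complex \<Rightarrow> ratfun \<Rightarrow> complex \<Rightarrow> bool" where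
  "RV z A c \<longleftrightarrow> (\<exists>n d. A = to_fract n / to_fract d \<and> ev z d \<noteq> 0 \<and> c = ev z n / ev z d)"

lemma ev_nz_imp: "ev z d \<noteq> 0 \<Longrightarrow> d \<noteq> 0" by auto

lemma RV_poly: "RV z (to_fract n) (ev z n)"
  unfolding RV_def by (rule exI[of _ n], rule exI[of _ 1]) simp

lemma RV_add: assumes "RV z A a" "RV z B b" shows "RV z (A + B) (a + b)"
proof -
  from assms obtain n1 d1 n2 d2 where h: "A = to_fract n1 / to_fract d1" "ev z d1 \<noteq> 0" "a = ev z n1 / ev z d1"
    "B = to_fract n2 / to_fract d2" "ev z d2 \<noteq> 0" "b = ev z n2 / ev z d2" unfolding RV_def by blast
  have "d1 \<noteq> 0" "d2 \<noteq> 0" using h by auto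
  have e1: "A + B = to_fract (n1 * d2 + n2 * d1) / to_fract (d1 * d2)"
    using h \<open>d1 \<noteq> 0\<close> \<open>d2 \<noteq> 0\<close> by (simp add: add_frac_eq)
  have e2: "a + b = ev z (n1 * d2 + n2 * d1) / ev z (d1 * d2)"
    using h by (simp add: add_frac_eq)
  show ?thesis unfolding RV_def
    by (rule exI[of _ "n1 * d2 + n2 * d1"], rule exI[of _ "d1 * d2"]) (use e1 e2 h in simp)
qed

lemma RV_mult: assumes "RV z A a" "RV z B b" shows "RV z (A * B) (a * b)"
proof -
  from assms obtain n1 d1 n2 d2 where h: "A = to_fract n1 / to_fract d1" "ev z d1 \<noteq> 0" "a = ev z n1 / ev z d1"
    "B = to_fract n2 / to_fract d2" "ev z d2 \<noteq> 0" "b = ev z n2 / ev z d2" unfolding RV_def by blast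
  show ?thesis unfolding RV_def
    by (rule exI[of _ "n1 * n2"], rule exI[of _ "d1 * d2"]) (use h in simp)
qed

lemma RV_minus: assumes "RV z A a" shows "RV z (- A) (- a)"
proof -
  from assms obtain n1 d1 where h: "A = to_fract n1 / to_fract d1" "ev z d1 \<noteq> 0" "a = ev z n1 / ev z d1"
    unfolding RV_def by blast
  show ?thesis unfolding RV_def
    by (rule exI[of _ "- n1"], rule exI[of _ "d1"]) (use h in simp)
qed

lemma RV_diff: assumes "RV z A a" "RV z B b" shows "RV z (A - B) (a - b)"
  using RV_add[OF assms(1) RV_minus[OF assms(2)]] by simp

lemma RV_inverse: assumes "RV z A a" "a \<noteq> 0" shows "RV z (inverse A) (inverse a)"
proof -
  from assms obtain n1 d1 where h: "A = to_fract n1 / to_fract d1" "ev z d1 \<noteq> 0" "a = ev z n1 / ev z d1"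
    unfolding RV_def by blast
  have "ev z n1 \<noteq> 0" using h assms(2) by auto
  then show ?thesis unfolding RV_def
    by (intro exI[of _ "d1"] exI[of _ "n1"]) (use h in simp)
qed

lemma RV_divide: assumes "RV z A a" "RV z B b" "b \<noteq> 0" shows "RV z (A / B) (a / b)"
  using RV_mult[OF assms(1) RV_inverse[OF assms(2,3)]] by (simp add: divide_inverse)

lemma RV_1: "RV z 1 1" using RV_poly[of z 1] by simp
lemma RV_0: "RV z 0 0" using RV_poly[of z 0] by simp

lemma RV_sum: "(\<And>i. i \<in> I \<Longrightarrow> RV z (f i) (g i)) \<Longrightarrow> RV z (sum f I) (sum g I)"
  by (induction I rule: infinite_finite_induct) (auto intro: RV_add RV_0)

lemma RV_prod: "(\<And>i. i \<in> I \<Longrightarrow> RV z (f i) (g i)) \<Longrightarrow> RV z (prod f I) (prod g I)"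
  by (induction I rule: infinite_finite_induct) (auto intro: RV_mult RV_1)

lemma RV_power: "RV z A a \<Longrightarrow> RV z (A ^ n) (a ^ n)"
  by (induction n) (auto intro: RV_mult RV_1)

lemma RV_qpoch: "RV z A a \<Longrightarrow> RV z X x \<Longrightarrow> RV z (qpoch A X n) (qpoch a x n)"
  unfolding qpoch_def by (intro RV_prod RV_diff RV_1 RV_mult RV_power)

lemma RV_qvar: "RV z qvar z"
  using RV_poly[of z "[:0,1:]"] by (simp add: qvar_def)

lemma RV_powi: assumes "RV z A a" "a \<noteq> 0" shows "RV z (A powi k) (a powi k)"
  using assms by (cases "k \<ge> 0") (auto simp: power_int_def intro!: RV_power RV_inverse)

lemma RV_den: assumes "RV z A a" shows "ev z (den_rf A) \<noteq> 0"
proof -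
  from assms obtain n d where h: "A = to_fract n / to_fract d" "ev z d \<noteq> 0" "a = ev z n / ev z d"
    unfolding RV_def by blast
  have d0: "d \<noteq> 0" using h by auto
  define N D where "N = num_rf A" and "D = den_rf A"
  have D0: "D \<noteq> 0" by (simp add: D_def den_rf_def)
  have "A = to_fract N / to_fract D"
    using Fract_quot_of_fract[of A] by (simp add: N_def D_def num_rf_def den_rf_def Fract_conv_to_fract)
  with h d0 D0 have "to_fract (N * d) = to_fract (n * D)" by (simp add: field_simps)
  hence e: "N * d = n * D" by (simp only: to_fract_eq_iff)
  have cop: "coprime D N" using coprime_quot_of_fract[of A] by (simp add: N_def D_def num_rf_def den_rf_def coprime_commute)
  have "D dvd N * d" using e by simp
  hence "D dvd d" using cop by (simp add: coprime_dvd_mult_right_iff)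
  then obtain k where "d = D * k" by (auto elim: dvdE)
  with h(2) show ?thesis by (auto simp: D_def)
qed

lemma RV_num0: assumes "RV z A 0" shows "ev z (num_rf A) = 0"
proof -
  from assms obtain n d where h: "A = to_fract n / to_fract d" "ev z d \<noteq> 0" "0 = ev z n / ev z d"
    unfolding RV_def by blast
  have d0: "d \<noteq> 0" using h by auto
  define N D where "N = num_rf A" and "D = den_rf A"
  have D0: "D \<noteq> 0" by (simp add: D_def den_rf_def)
  have "A = to_fract N / to_fract D"
    using Fract_quot_of_fract[of A] by (simp add: N_def D_def num_rf_def den_rf_def Fract_conv_to_fract)
  with h d0 D0 have "to_fract (N * d) = to_fract (n * D)" by (simp add: field_simps)
  hence e: "N * d = n * D" by (simp only: to_fract_eq_iff)
  have "ev z n = 0" using h by simp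
  hence "ev z N * ev z d = 0" using e by (metis ev_mult mult_zero_left)
  with h(2) show ?thesis by (simp add: N_def)
qed

lemma qcong_via_roots:
  assumes "p > 0"
    and "\<And>z. z ^ p = 1 \<Longrightarrow> z \<noteq> 1 \<Longrightarrow> \<exists>a b. RV z A a \<and> RV z B b \<and> a = b"
  shows "qcong A B (qint p) 1"
proof -
  show ?thesis unfolding qcong_def
  proof (intro conjI)
    show "coprime (den_rf A) (qint p)"
    proof (rule qint_coprime[OF assms(1)])
      fix z :: complex assume "z ^ p = 1" "z \<noteq> 1"
      then obtain a where "RV z A a" using assms(2) by blast
      then show "ev z (den_rf A) \<noteq> 0" by (rule RV_den)
    qed
    show "coprime (den_rf B) (qint p)"
    proof (rule qint_coprime[OF assms(1)])
      fix z :: complex assume "z ^ p = 1" "z \<noteq> 1"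
      then obtain a where "RV z B a" using assms(2) by blast
      then show "ev z (den_rf B) \<noteq> 0" by (rule RV_den)
    qed
    have "qint p dvd num_rf (A - B)"
    proof (rule qint_dvd[OF assms(1)])
      fix z :: complex assume "z ^ p = 1" "z \<noteq> 1"
      then obtain a b where "RV z A a" "RV z B b" "a = b" using assms(2) by blast
      hence "RV z (A - B) 0" using RV_diff by fastforce
      then show "ev z (num_rf (A - B)) = 0" by (rule RV_num0)
    qed
    then show "qint p ^ 1 dvd num_rf (A - B)" by simp
  qed
qed



definition tri :: "nat \<Rightarrow> nat" where "tri k = (\<Sum>i<k. i)"

lemma tri_Suc [simp]: "tri (Suc k) = tri k + k" by (simp add: tri_def)
lemma tri_0 [simp]: "tri 0 = 0" by (simp add: tri_def)

definition cb :: "'a::field \<Rightarrow> nat \<Rightarrow> nat \<Rightarrow> 'a" where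
  "cb Q a k = (\<Prod>i<k. 1 - Q ^ (a - i)) / qpoch Q Q k"

lemma qpoch_Suc: "qpoch x Q (Suc n) = qpoch x Q n * (1 - x * Q ^ n)"
  by (simp add: qpoch_def)
lemma qpoch_0 [simp]: "qpoch x Q 0 = 1"
  by (simp add: qpoch_def)

lemma qpoch_add: "qpoch x Q (m + n) = qpoch x Q m * qpoch (x * Q ^ m) Q n"
  by (induction n) (simp_all add: qpoch_Suc power_add algebra_simps)

lemma qpoch_nz:
  fixes Q :: "'a::field"
  assumes "\<And>i. 1 \<le> i \<Longrightarrow> i \<le> N \<Longrightarrow> Q ^ i \<noteq> 1" "k \<le> N"
  shows "qpoch Q Q k \<noteq> 0"
  using assms(2)
proof (induction k)
  case 0 then show ?case by simp
next
  case (Suc k)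
  have "Q * Q ^ k \<noteq> 1" using assms(1)[of "Suc k"] Suc.prems by simp
  then show ?case using Suc by (simp add: qpoch_Suc)
qed

lemma cb_0 [simp]: "cb Q a 0 = 1" by (simp add: cb_def)

lemma cb_zero: "a < k \<Longrightarrow> cb Q a k = 0"
  unfolding cb_def by (subst prod_zero[of "{..<k}"]) (auto intro!: bexI[of _ a])

lemma cb_pascal:
  fixes Q :: "'a::field"
  assumes nz: "\<And>i. 1 \<le> i \<Longrightarrow> i \<le> N \<Longrightarrow> Q ^ i \<noteq> 1" and "k \<le> a" "a + 1 \<le> N"
  shows "cb Q (Suc a) (Suc k) = cb Q a (Suc k) + Q ^ (a - k) * cb Q a k"
proof -
  define P where "P = (\<Prod>i<k. 1 - Q ^ (a - i))"
  have P1: "(\<Prod>i<Suc k. 1 - Q ^ (Suc a - i)) = (1 - Q ^ Suc a) * P"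
    unfolding P_def by (subst prod.lessThan_Suc_shift) simp
  have P2: "(\<Prod>i<Suc k. 1 - Q ^ (a - i)) = P * (1 - Q ^ (a - k))"
    unfolding P_def by simp
  have n1: "qpoch Q Q (Suc k) \<noteq> 0" using qpoch_nz[OF nz] assms by simp
  have n0: "qpoch Q Q k \<noteq> 0" using qpoch_nz[OF nz] assms by simp
  have qs: "qpoch Q Q (Suc k) = qpoch Q Q k * (1 - Q ^ Suc k)" by (simp add: qpoch_Suc)
  have key: "1 - Q ^ Suc a = (1 - Q ^ (a - k)) + Q ^ (a - k) * (1 - Q ^ Suc k)"
  proof -
    have "Q ^ (a - k) * Q ^ Suc k = Q ^ Suc a" using assms(2) by (simp add: power_add[symmetric])
    then show ?thesis by (simp add: algebra_simps)
  qed
  have n2: "1 - Q ^ Suc k \<noteq> 0" using n1 qs by auto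
  have "cb Q a (Suc k) + Q ^ (a - k) * cb Q a k
      = (P * (1 - Q ^ (a - k)) + Q ^ (a - k) * P * (1 - Q ^ Suc k)) / qpoch Q Q (Suc k)"
    unfolding cb_def P2 P_def[symmetric] qs using n0 n2 by (simp add: field_simps)
  also have "\<dots> = (1 - Q ^ Suc a) * P / qpoch Q Q (Suc k)"
    by (subst key) (simp add: algebra_simps)
  finally show ?thesis unfolding cb_def P1 by simp
qed

lemma qbin:
  fixes Q :: "'a::field"
  assumes nz: "\<And>i. 1 \<le> i \<Longrightarrow> i \<le> N \<Longrightarrow> Q ^ i \<noteq> 1" and "a \<le> N"
  shows "(\<Prod>i<a. 1 + x * Q ^ i) = (\<Sum>k\<le>a. cb Q a k * Q ^ tri k * x ^ k)"
  using assms(2)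
proof (induction a)
  case 0 then show ?case by simp
next
  case (Suc a)
  define S where "S = (\<Sum>k\<le>a. cb Q a k * Q ^ tri k * x ^ k)"
  have IH: "(\<Prod>i<a. 1 + x * Q ^ i) = S" using Suc by (simp add: S_def)
  have e1: "(\<Sum>k\<le>Suc a. cb Q (Suc a) k * Q ^ tri k * x ^ k)
      = 1 + (\<Sum>k\<le>a. cb Q (Suc a) (Suc k) * Q ^ tri (Suc k) * x ^ Suc k)"
    by (subst sum.atMost_Suc_shift) simp
  have e2: "(\<Sum>k\<le>a. cb Q (Suc a) (Suc k) * Q ^ tri (Suc k) * x ^ Suc k)
      = (\<Sum>k\<le>a. cb Q a (Suc k) * Q ^ tri (Suc k) * x ^ Suc k)
        + (\<Sum>k\<le>a. x * Q ^ a * (cb Q a k * Q ^ tri k * x ^ k))"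
  proof -
    have "cb Q (Suc a) (Suc k) * Q ^ tri (Suc k) * x ^ Suc k
        = cb Q a (Suc k) * Q ^ tri (Suc k) * x ^ Suc k + x * Q ^ a * (cb Q a k * Q ^ tri k * x ^ k)"
      if "k \<le> a" for k
    proof -
      have "Q ^ (a - k) * Q ^ (tri k + k) = Q ^ a * Q ^ tri k"
        using that by (simp add: power_add[symmetric])
      moreover have "Q ^ k * Q ^ (a - k) = Q ^ a" using that by (simp add: power_add[symmetric])
      ultimately show ?thesis using cb_pascal[OF nz that] Suc.prems
        by (simp add: algebra_simps power_add)
    qed
    then show ?thesis by (simp add: sum.distrib)
  qed
  have e3: "1 + (\<Sum>k\<le>a. cb Q a (Suc k) * Q ^ tri (Suc k) * x ^ Suc k) = S"
  proof -
    have "S + cb Q a (Suc a) * Q ^ tri (Suc a) * x ^ Suc a = (\<Sum>k\<le>Suc a. cb Q a k * Q ^ tri k * x ^ k)"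
      by (simp add: S_def)
    also have "\<dots> = 1 + (\<Sum>k\<le>a. cb Q a (Suc k) * Q ^ tri (Suc k) * x ^ Suc k)"
      by (subst sum.atMost_Suc_shift) simp
    finally show ?thesis by (simp add: cb_zero)
  qed
  have "(\<Prod>i<Suc a. 1 + x * Q ^ i) = S * (1 + x * Q ^ a)" using IH by simp
  also have "\<dots> = S + (x * Q ^ a) * S" by (simp add: algebra_simps)
  also have "\<dots> = S + (\<Sum>k\<le>a. x * Q ^ a * (cb Q a k * Q ^ tri k * x ^ k))"
    unfolding S_def by (simp only: sum_distrib_left)
  finally show ?case using e1 e2 e3 by simp
qed

lemma R1:
  fixes Q u :: "'a::field"
  assumes "u * Q ^ a = 1" "k \<le> a"
  shows "qpoch u Q k = (-u) ^ k * Q ^ tri k * (\<Prod>i<k. 1 - Q ^ (a - i))"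
  using assms(2)
proof (induction k)
  case 0 then show ?case by simp
next
  case (Suc k)
  have "Q ^ k * Q ^ (a - k) = Q ^ a" using Suc.prems by (simp add: power_add[symmetric])
  hence "(-u * Q ^ k) * (1 - Q ^ (a - k)) = 1 - u * Q ^ k"
    using assms(1) by (simp add: algebra_simps)
  then show ?case using Suc by (simp add: qpoch_Suc power_add algebra_simps)
qed

lemma Ak:
  fixes Q u :: "'a::field"
  assumes "u * Q ^ a = 1" "k \<le> a"
  shows "qpoch u Q k / qpoch Q Q k = (-u) ^ k * Q ^ tri k * cb Q a k"
  using R1[OF assms] by (simp add: cb_def)

lemma inner:
  fixes Q u :: "'a::field"
  assumes nz: "\<And>i. 1 \<le> i \<Longrightarrow> i \<le> N \<Longrightarrow> Q ^ i \<noteq> 1" and "a \<le> N" and u: "u * Q ^ a = 1"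
  shows "(\<Sum>k\<le>a. qpoch u Q k / qpoch Q Q k * y ^ k) = (\<Prod>i<a. 1 - u * y * Q ^ i)"
proof -
  have "(\<Prod>i<a. 1 - u * y * Q ^ i) = (\<Prod>i<a. 1 + (- (u * y)) * Q ^ i)" by simp
  also have "\<dots> = (\<Sum>k\<le>a. cb Q a k * Q ^ tri k * (- (u * y)) ^ k)" by (rule qbin[OF nz assms(2)])
  also have "\<dots> = (\<Sum>k\<le>a. qpoch u Q k / qpoch Q Q k * y ^ k)"
    by (rule sum.cong) (simp_all add: Ak[OF u], metis minus_mult_left power_mult_distrib)
  finally show ?thesis by simp
qed

lemma inner0:
  fixes Q u :: "'a::field"
  assumes u: "u * Q ^ a = 1" and "1 \<le> j" "j \<le> a"
  shows "(\<Prod>i<a. 1 - u * Q ^ j * Q ^ i) = 0"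
proof (rule prod_zero)
  have "u * Q ^ j * Q ^ (a - j) = 1" using u assms by (simp add: mult.assoc power_add[symmetric])
  then show "\<exists>i\<in>{..<a}. 1 - u * Q ^ j * Q ^ i = 0" using assms by (intro bexI[of _ "a - j"]) auto
qed simp

lemma split2:
  fixes Q :: "'a::field"
  assumes nz: "\<And>i. 1 \<le> i \<Longrightarrow> i \<le> N \<Longrightarrow> Q ^ i \<noteq> 1" and "a \<le> N" "n \<le> N"
  shows "qpoch (Q ^ Suc a) Q n / qpoch Q Q n = qpoch (Q ^ Suc n) Q a / qpoch Q Q a"
proof -
  have "qpoch Q Q (a + n) = qpoch Q Q a * qpoch (Q ^ Suc a) Q n" by (simp add: qpoch_add)
  moreover have "qpoch Q Q (n + a) = qpoch Q Q n * qpoch (Q ^ Suc n) Q a" by (simp add: qpoch_add)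
  moreover have "qpoch Q Q a \<noteq> 0" "qpoch Q Q n \<noteq> 0" using qpoch_nz[OF nz] assms by auto
  ultimately show ?thesis by (simp add: field_simps add.commute)
qed

lemma qpoch_rev: "(\<Prod>i<a. 1 - Q ^ (a - i)) = qpoch Q Q a"
proof -
  have "(\<Prod>i<a. 1 - Q ^ (a - i)) = (\<Prod>i<a. (\<lambda>j. 1 - Q * Q ^ j) (a - Suc i))"
    by (rule prod.cong) (simp_all, metis Suc_diff_Suc power_Suc)
  also have "\<dots> = (\<Prod>i<a. 1 - Q * Q ^ i)" by (rule prod.nat_diff_reindex)
  finally show ?thesis by (simp add: qpoch_def)
qed

lemma mainid:
  fixes Q u :: "'a::field"
  assumes nz: "\<And>i. 1 \<le> i \<Longrightarrow> i \<le> N \<Longrightarrow> Q ^ i \<noteq> 1" and "a + s \<le> N" and u: "u * Q ^ a = 1"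
  shows "(\<Sum>k\<le>a. qpoch u Q k * qpoch (Q ^ Suc a) Q (k + s) / (qpoch Q Q k * qpoch Q Q (k + s)))
         = (-u) ^ a * Q ^ tri a"
proof -
  have aN: "a \<le> N" using assms by simp
  define D where "D = qpoch Q Q a"
  have D0: "D \<noteq> 0" unfolding D_def using qpoch_nz[OF nz aN] .
  define E where "E j = cb Q a j * Q ^ tri j * (- (Q ^ Suc s)) ^ j" for j
  define A where "A k = qpoch u Q k / qpoch Q Q k" for k
  have T: "qpoch u Q k * qpoch (Q ^ Suc a) Q (k + s) / (qpoch Q Q k * qpoch Q Q (k + s))
        = A k * (\<Sum>j\<le>a. E j * (Q ^ j) ^ k) / D" if "k \<le> a" for k
  proof -
    have kN: "k + s \<le> N" using that assms(2) by linarith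
    have "qpoch (Q ^ Suc a) Q (k + s) / qpoch Q Q (k + s) = qpoch (Q ^ Suc (k + s)) Q a / D"
      unfolding D_def by (rule split2[OF nz aN kN])
    also have "qpoch (Q ^ Suc (k + s)) Q a = (\<Prod>i<a. 1 + (- (Q ^ Suc s * Q ^ k)) * Q ^ i)"
      by (simp add: qpoch_def power_add mult.commute mult.left_commute)
    also have "\<dots> = (\<Sum>j\<le>a. cb Q a j * Q ^ tri j * (- (Q ^ Suc s * Q ^ k)) ^ j)"
      by (rule qbin[OF nz aN])
    also have "\<dots> = (\<Sum>j\<le>a. E j * (Q ^ j) ^ k)"
    proof (rule sum.cong)
      fix j
      have "(- (Q ^ Suc s * Q ^ k)) ^ j = (- (Q ^ Suc s)) ^ j * (Q ^ k) ^ j"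
        by (metis minus_mult_left power_mult_distrib)
      also have "(Q ^ k) ^ j = (Q ^ j) ^ k" by (simp add: power_mult[symmetric] mult.commute)
      finally show "cb Q a j * Q ^ tri j * (- (Q ^ Suc s * Q ^ k)) ^ j = E j * (Q ^ j) ^ k"
        by (simp add: E_def mult.assoc)
    qed simp
    finally have "qpoch (Q ^ Suc a) Q (k + s) / qpoch Q Q (k + s) = (\<Sum>j\<le>a. E j * (Q ^ j) ^ k) / D" .
    then show ?thesis unfolding A_def by (metis times_divide_times_eq times_divide_eq_right)
  qed
  have "(\<Sum>k\<le>a. qpoch u Q k * qpoch (Q ^ Suc a) Q (k + s) / (qpoch Q Q k * qpoch Q Q (k + s)))
      = (\<Sum>k\<le>a. A k * (\<Sum>j\<le>a. E j * (Q ^ j) ^ k) / D)"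
    by (rule sum.cong[OF refl], rule T, simp)
  also have "\<dots> = (\<Sum>j\<le>a. E j * (\<Sum>k\<le>a. A k * (Q ^ j) ^ k)) / D"
  proof -
    have "(\<Sum>k\<le>a. A k * (\<Sum>j\<le>a. E j * (Q ^ j) ^ k) / D)
        = (\<Sum>k\<le>a. \<Sum>j\<le>a. E j * (A k * (Q ^ j) ^ k) / D)"
      by (rule sum.cong[OF refl]) (simp add: sum_distrib_left sum_divide_distrib mult.left_commute)
    also have "\<dots> = (\<Sum>j\<le>a. \<Sum>k\<le>a. E j * (A k * (Q ^ j) ^ k) / D)"
      by (rule sum.swap)
    also have "\<dots> = (\<Sum>j\<le>a. E j * (\<Sum>k\<le>a. A k * (Q ^ j) ^ k) / D)"
      by (rule sum.cong[OF refl]) (simp add: sum_distrib_left sum_divide_distrib)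
    also have "\<dots> = (\<Sum>j\<le>a. E j * (\<Sum>k\<le>a. A k * (Q ^ j) ^ k)) / D"
      by (simp add: sum_divide_distrib)
    finally show ?thesis .
  qed
  also have "(\<Sum>j\<le>a. E j * (\<Sum>k\<le>a. A k * (Q ^ j) ^ k)) = (\<Sum>j\<le>a. E j * (\<Prod>i<a. 1 - u * Q ^ j * Q ^ i))"
    by (rule sum.cong[OF refl]) (simp only: A_def inner[OF nz aN u])
  also have "\<dots> = E 0 * (\<Prod>i<a. 1 - u * Q ^ 0 * Q ^ i)"
  proof (cases a)
    case 0 then show ?thesis by simp
  next
    case (Suc b)
    have "(\<Sum>j\<le>Suc b. E j * (\<Prod>i<a. 1 - u * Q ^ j * Q ^ i))
        = E 0 * (\<Prod>i<a. 1 - u * Q ^ 0 * Q ^ i) + (\<Sum>j\<le>b. E (Suc j) * (\<Prod>i<a. 1 - u * Q ^ Suc j * Q ^ i))"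
      by (rule sum.atMost_Suc_shift)
    also have "(\<Sum>j\<le>b. E (Suc j) * (\<Prod>i<a. 1 - u * Q ^ Suc j * Q ^ i)) = 0"
    proof (rule sum.neutral, rule ballI)
      fix j assume "j \<in> {..b}"
      hence "(\<Prod>i<a. 1 - u * Q ^ Suc j * Q ^ i) = 0" using Suc by (intro inner0[OF u]) auto
      then show "E (Suc j) * (\<Prod>i<a. 1 - u * Q ^ Suc j * Q ^ i) = 0" by simp
    qed
    finally show ?thesis using Suc by simp
  qed
  also have "E 0 * (\<Prod>i<a. 1 - u * Q ^ 0 * Q ^ i) = qpoch u Q a"
    by (simp add: E_def qpoch_def)
  also have "qpoch u Q a = (-u) ^ a * Q ^ tri a * D"
    using R1[OF u order_refl] by (simp add: qpoch_rev D_def)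
  finally show ?thesis using D0 by simp
qed



lemma lnr_ex1:
  fixes d n :: int
  assumes p: "prime p" and nd: "\<not> int p dvd d"
  shows "\<exists>!a. a < p \<and> int p dvd (int a * d - n)"
proof -
  have pi: "prime (int p)" using p by simp
  have cop: "coprime (int p) d" using prime_imp_coprime[OF pi nd] .
  obtain u v where uv: "u * d + v * int p = gcd d (int p)" using bezout_int by blast
  hence uv1: "u * d + v * int p = 1" using cop by (simp add: gcd.commute coprime_iff_gcd_eq_1)
  have pp: "int p > 0" using p prime_gt_0_nat by simp
  define a where "a = nat ((n * u) mod int p)"
  have ia: "int a = (n * u) mod int p" unfolding a_def using pp by simp
  have alt: "a < p" using pp ia by (metis Euclidean_Rings.pos_mod_bound of_nat_less_iff)
  have "int p dvd ((n * u) mod int p - n * u)"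
    using mod_eq_dvd_iff[of "(n*u) mod int p" "int p" "n*u"] by simp
  hence "int p dvd ((n * u) mod int p - n * u) * d - n * v * int p"
    by (simp add: dvd_diff dvd_mult2)
  moreover have "((n * u) mod int p - n * u) * d - n * v * int p = int a * d - n * (u * d + v * int p)"
    by (simp add: ia algebra_simps)
  moreover have "int a * d - n * (u * d + v * int p) = int a * d - n" by (simp add: uv1)
  ultimately have ex: "a < p \<and> int p dvd (int a * d - n)" using alt by simp
  show ?thesis
  proof (rule ex1I[of _ a])
    show "a < p \<and> int p dvd (int a * d - n)" by (rule ex)
  next
    fix b assume b: "b < p \<and> int p dvd (int b * d - n)"
    have "int p dvd (int b * d - n) - (int a * d - n)" by (rule dvd_diff[OF conjunct2[OF b] conjunct2[OF ex]])
    hence "int p dvd (int b - int a) * d" by (simp add: algebra_simps)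
    hence "int p dvd (int b - int a)" using pi nd by (simp add: prime_dvd_mult_iff)
    hence "int b mod int p = int a mod int p" by (simp add: mod_eq_dvd_iff)
    thus "b = a" using b alt by simp
  qed
qed

lemma lnr_prop:
  assumes p: "prime p" and m0: "0 < m" and pm: "\<not> p dvd m"
  shows "lnr p (- (of_nat t / of_nat m)) < p \<and>
         int p dvd int (lnr p (- (of_nat t / of_nat m))) * int m + int t"
proof -
  define x :: rat where "x = - (of_nat t / of_nat m)"
  obtain n d where q: "quotient_of x = (n, d)" by (cases "quotient_of x") auto
  have d0: "d > 0" using quotient_of_denom_pos[OF q] .
  have cnd: "coprime n d" using quotient_of_coprime[OF q] .
  have h1: "x * of_int d = of_int n" using quotient_of_div[OF q] d0 by simp
  have h2: "x * of_nat m = - of_nat t" using m0 by (simp add: x_def)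
  have "of_int n * of_nat m = (x * of_nat m) * (of_int d :: rat)" by (simp add: h1[symmetric] ac_simps)
  hence "of_int n * of_nat m = (- of_nat t) * (of_int d :: rat)" by (simp only: h2)
  hence "rat_of_int (n * int m) = rat_of_int (- (int t * d))" by simp
  hence e: "n * int m = - (int t * d)" by (simp only: of_int_eq_iff)
  have "d dvd n * int m" using e by simp
  hence "d dvd int m" using cnd by (simp add: coprime_commute coprime_dvd_mult_right_iff)
  hence nd: "\<not> int p dvd d" using pm by (metis dvd_trans int_dvd_int_iff)
  define a where "a = lnr p x"
  have "a < p \<and> int p dvd (int a * d - n)"
    unfolding a_def lnr_def q using theI'[OF lnr_ex1[OF p nd, of n]] by simp
  then have alt: "a < p" and dv: "int p dvd (int a * d - n)" by auto
  hence "int p dvd (int a * d - n) * int m" by simp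
  also have "(int a * d - n) * int m = d * (int a * int m + int t)" using e by (simp add: algebra_simps)
  finally have "int p dvd int a * int m + int t"
    using nd p by (simp add: prime_dvd_mult_iff)
  then show ?thesis using alt by (simp add: a_def x_def)
qed



lemma tri2: "2 * tri a + a = a * a"
  by (induction a) (auto simp: algebra_simps)

lemma zpow_dvd: fixes z :: complex assumes "z ^ p = 1" "p dvd n" shows "z ^ n = 1"
proof -
  from assms(2) obtain k where "n = p * k" by (auto elim: dvdE)
  then show ?thesis using assms(1) by (simp add: power_mult)
qed

lemma zpow_ne:
  fixes z :: complex
  assumes p: "prime p" and z: "z ^ p = 1" "z \<noteq> 1" and i: "\<not> p dvd i"
  shows "z ^ i \<noteq> 1"
proof
  assume zi: "z ^ i = 1"
  have i0: "i \<noteq> 0" using i by (metis dvd_0_right)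
  have g: "gcd i p = 1" using prime_imp_coprime[OF p i] by (simp add: coprime_iff_gcd_eq_1 gcd.commute)
  obtain x y where xy: "i * x = p * y + gcd i p" using bezout_nat[OF i0] by blast
  have "z ^ (i * x) = 1" using zi by (simp add: power_mult)
  moreover have "z ^ (i * x) = z" using xy g z(1) by (simp add: power_add power_mult)
  ultimately show False using z(2) by simp
qed

lemma keyz:
  fixes z :: complex
  assumes p: "prime p" and pm: "\<not> p dvd m" and z: "z ^ p = 1" "z \<noteq> 1"
    and as: "a + s \<le> p - 1" and da: "p dvd a * m + r" and rm: "r < m"
  shows "RV z (\<Sum>k<p - s. (qpoch (qvar ^ r) (qvar ^ m) k * qpoch (qvar ^ (m - r)) (qvar ^ m) (k + s))
                     / (qpoch (qvar ^ m) (qvar ^ m) k * qpoch (qvar ^ m) (qvar ^ m) (k + s)))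
             ((-1) ^ a * inverse (z ^ (m * a * (a + 1) div 2)))"
proof -
  have z0: "z \<noteq> 0" using z(1) prime_gt_0_nat[OF p] by (auto simp: power_0_left)
  define Q where "Q = z ^ m"
  define u where "u = z ^ r"
  define N where "N = p - 1"
  have nz: "Q ^ i \<noteq> 1" if "1 \<le> i" "i \<le> N" for i
  proof -
    have "\<not> p dvd i"
    proof
      assume "p dvd i"
      hence "p \<le> i" using that by (intro dvd_imp_le) auto
      thus False using that prime_gt_0_nat[OF p] by (simp add: N_def)
    qed
    hence "\<not> p dvd m * i" using p pm by (simp add: prime_dvd_mult_iff)
    then show ?thesis unfolding Q_def power_mult[symmetric] by (rule zpow_ne[OF p z])
  qed
  have u: "u * Q ^ a = 1"
    unfolding u_def Q_def power_mult[symmetric] power_add[symmetric]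
    by (rule zpow_dvd[OF z(1)]) (use da in \<open>simp add: ac_simps\<close>)
  have v: "z ^ (m - r) = Q ^ Suc a"
  proof -
    have "m * Suc a = (m - r) + (a * m + r)" using rm by (simp add: algebra_simps)
    hence "Q ^ Suc a = z ^ (m - r) * z ^ (a * m + r)" unfolding Q_def by (metis power_add power_mult)
    also have "z ^ (a * m + r) = 1" by (rule zpow_dvd[OF z(1) da])
    finally show ?thesis by simp
  qed
  have asN: "a + s \<le> N" unfolding N_def by (rule as)
  define T where "T k = qpoch u Q k * qpoch (Q ^ Suc a) Q (k + s) / (qpoch Q Q k * qpoch Q Q (k + s))" for k
  have RVsum: "RV z (\<Sum>k<p - s. (qpoch (qvar ^ r) (qvar ^ m) k * qpoch (qvar ^ (m - r)) (qvar ^ m) (k + s))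
                     / (qpoch (qvar ^ m) (qvar ^ m) k * qpoch (qvar ^ m) (qvar ^ m) (k + s)))
             (\<Sum>k<p - s. T k)"
  proof (rule RV_sum)
    fix k assume "k \<in> {..<p - s}"
    hence kN: "k \<le> N" "k + s \<le> N" unfolding N_def by auto
    have d1: "qpoch Q Q k \<noteq> 0" by (rule qpoch_nz[OF nz kN(1)])
    have d2: "qpoch Q Q (k + s) \<noteq> 0" by (rule qpoch_nz[OF nz kN(2)])
    have Rr: "RV z (qvar ^ r) u" unfolding u_def by (rule RV_power[OF RV_qvar])
    have Rm: "RV z (qvar ^ m) Q" unfolding Q_def by (rule RV_power[OF RV_qvar])
    have Rmr: "RV z (qvar ^ (m - r)) (Q ^ Suc a)" unfolding v[symmetric] by (rule RV_power[OF RV_qvar])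
    show "RV z ((qpoch (qvar ^ r) (qvar ^ m) k * qpoch (qvar ^ (m - r)) (qvar ^ m) (k + s))
                     / (qpoch (qvar ^ m) (qvar ^ m) k * qpoch (qvar ^ m) (qvar ^ m) (k + s))) (T k)"
      unfolding T_def
      by (intro RV_divide RV_mult RV_qpoch Rr Rm Rmr) (use d1 d2 in simp)
  qed
  have val: "(\<Sum>k<p - s. T k) = (\<Sum>k\<le>a. T k)"
  proof (rule sum.mono_neutral_right)
    show "{..a} \<subseteq> {..<p - s}" using as prime_gt_0_nat[OF p] by auto
    show "\<forall>i\<in>{..<p - s} - {..a}. T i = 0"
    proof
      fix i assume "i \<in> {..<p - s} - {..a}"
      hence "a < i" by auto
      hence "qpoch u Q i = 0" unfolding qpoch_def using u by (intro prod_zero) (auto intro!: bexI[of _ a])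
      then show "T i = 0" by (simp add: T_def)
    qed
  qed simp
  also have "\<dots> = (-u) ^ a * Q ^ tri a"
    unfolding T_def by (rule mainid[OF nz asN u])
  also have "\<dots> = (-1) ^ a * inverse (z ^ (m * a * (a + 1) div 2))"
  proof -
    define F where "F = m * a * (a + 1) div 2"
    have F2: "2 * F = m * a * (a + 1)" unfolding F_def by simp
    have t2: "m * (2 * tri a + a) = m * (a * a)" using tri2[of a] by simp
    have "2 * (r * a + m * tri a + F) = 2 * (a * (a * m + r))"
      using F2 t2 by (simp add: algebra_simps)
    hence ex: "r * a + m * tri a + F = a * (a * m + r)" by simp
    have "u ^ a * Q ^ tri a * z ^ F = z ^ (r * a + m * tri a + F)"
      unfolding u_def Q_def by (simp add: power_mult[symmetric] power_add mult.commute)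
    also have "\<dots> = (z ^ (a * m + r)) ^ a" unfolding ex by (simp add: power_mult[symmetric] mult.commute)
    also have "\<dots> = 1" using zpow_dvd[OF z(1) da] by simp
    finally have uq: "u ^ a * Q ^ tri a = inverse (z ^ F)" using z0 by (simp add: field_simps)
    have "(-u) ^ a * Q ^ tri a = (-1) ^ a * (u ^ a * Q ^ tri a)"
      unfolding power_minus[of u a] by (rule mult.assoc)
    then show ?thesis unfolding F_def[symmetric] uq .
  qed
  finally show ?thesis using RVsum by (simp only:)
qed



lemma powi_cong:
  fixes z :: complex
  assumes "z ^ p = 1" "z \<noteq> 0" "int p dvd (i - j)"
  shows "z powi i = z powi j"
proof -
  obtain k where k: "i - j = int p * k" using assms(3) by (auto elim: dvdE)
  hence "i = j + int p * k" by simp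
  hence "z powi i = z powi j * (z powi int p) powi k"
    using assms(2) by (simp add: power_int_add power_int_mult)
  also have "z powi int p = 1" using assms(1) by simp
  finally show ?thesis by simp
qed

lemma arith2:
  fixes P M R A :: int
  assumes d: "P dvd M * A + R" and pr: "prime P" and pM: "\<not> P dvd M" and P2: "\<not> P dvd 2"
    and dX: "2 * M dvd R * (M - R) * (1 - P ^ 2)" and M0: "M > 0"
  shows "P dvd R * (M - R) * (1 - P ^ 2) div (2 * M) - (- (M * A * (A + 1) div 2))"
proof -
  define X where "X = R * (M - R) * (1 - P ^ 2)"
  define E where "E = X div (2 * M)"
  define F where "F = M * A * (A + 1) div 2"
  have XE: "X = 2 * M * E" unfolding E_def using dX X_def by simp
  have ev: "even (A * (A + 1))" by simp
  have F2: "M * A * (A + 1) = 2 * F" unfolding F_def using ev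
    by (metis dvd_mult mult.assoc dvd_mult_div_cancel)
  obtain w where w: "M * A + R = P * w" using d by (auto elim: dvdE)
  have MA: "M * A = P * w - R" using w by simp
  have h1: "2 * M * (E + F) = X + M * (M * A * (A + 1))" using XE F2 by (simp add: algebra_simps)
  have h2: "M * (M * A * (A + 1)) = (M * A) * (M * A + M)" by (simp add: algebra_simps)
  have h3: "(M * A) * (M * A + M) = (P * w - R) * (P * w - R + M)" by (simp only: MA)
  have h4: "X + (P * w - R) * (P * w - R + M) = P * (- (R * (M - R) * P) + P * w * w - 2 * w * R + w * M)"
    unfolding X_def by (simp add: algebra_simps power2_eq_square)
  have "2 * M * (E + F) = P * (- (R * (M - R) * P) + P * w * w - 2 * w * R + w * M)"
    using h1 h2 h3 h4 by simp
  hence "P dvd 2 * M * (E + F)" by simp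
  hence "P dvd E + F" using pr pM P2 by (simp add: prime_dvd_mult_iff)
  then show ?thesis by (simp add: E_def F_def X_def)
qed

lemma div2m:
  fixes p m r :: nat
  assumes "odd p" "m dvd (p - 1) \<or> m dvd (p + 1)" "p > 0"
  shows "2 * int m dvd int r * (int m - int r) * (1 - int p ^ 2)"
proof -
  obtain t0 where t0: "p = 2 * t0 + 1" using assms(1) by (elim oddE) simp
  define t where "t = int t0"
  have t: "int p = 2 * t + 1" using t0 by (simp add: t_def)
  have fac: "1 - int p ^ 2 = - ((int p - 1) * (int p + 1))" by (simp add: algebra_simps power2_eq_square)
  have "2 * int m dvd (int p - 1) * (int p + 1)"
    using assms(2)
  proof
    assume "m dvd p - 1"
    then obtain c where "p - 1 = m * c" by (auto elim: dvdE)
    hence "int (p - 1) = int m * int c" by simp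
    hence "int p - 1 = int m * int c" using assms(3) by (simp add: of_nat_diff)
    hence "(int p - 1) * (int p + 1) = 2 * int m * (int c * (t + 1))" using t by (simp add: algebra_simps)
    then show ?thesis by simp
  next
    assume "m dvd p + 1"
    then obtain c where "p + 1 = m * c" by (auto elim: dvdE)
    hence "int (p + 1) = int m * int c" by simp
    hence "int p + 1 = int m * int c" by simp
    hence "(int p - 1) * (int p + 1) = 2 * int m * (int c * t)" using t by (simp add: algebra_simps)
    then show ?thesis by simp
  qed
  then show ?thesis unfolding fac by (simp add: dvd_mult)
qed



theorem theorem2p7:
  fixes p m r s :: nat
  assumes "prime p" and "odd p" and "0 < r" and "0 < m" and "\<not> p dvd m" and "r < m"
    and "s \<le> lnr p (- (of_nat (m - r) / of_nat m))"
  shows "qcong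
           (\<Sum>k<p - s. (qpoch (qvar ^ r) (qvar ^ m) k * qpoch (qvar ^ (m - r)) (qvar ^ m) (k + s))
                     / (qpoch (qvar ^ m) (qvar ^ m) k * qpoch (qvar ^ m) (qvar ^ m) (k + s)))
           ((-1) ^ lnr p (- (of_nat r / of_nat m)) *
              qvar powi (- (int m * int (lnr p (- (of_nat r / of_nat m)))
                              * (int (lnr p (- (of_nat r / of_nat m))) + 1) div 2)))
           (qint p) 1
       \<and> (m dvd (p - 1) \<or> m dvd (p + 1) \<longrightarrow>
          qcong
           (\<Sum>k<p - s. (qpoch (qvar ^ r) (qvar ^ m) k * qpoch (qvar ^ (m - r)) (qvar ^ m) (k + s))
                     / (qpoch (qvar ^ m) (qvar ^ m) k * qpoch (qvar ^ m) (qvar ^ m) (k + s)))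
           ((-1) ^ lnr p (- (of_nat r / of_nat m)) *
              qvar powi ((int r * int (m - r) * (1 - int p ^ 2)) div (2 * int m)))
           (qint p) 1)"
proof -
  note p = assms(1) and pm = assms(5) and rm = assms(6)
  have p0: "p > 0" using prime_gt_0_nat[OF p] .
  define a where "a = lnr p (- (of_nat r / of_nat m))"
  define b where "b = lnr p (- (of_nat (m - r) / of_nat m))"
  have ha: "a < p" "int p dvd int a * int m + int r"
    using lnr_prop[OF p assms(4) pm, of r] by (auto simp: a_def)
  have hb: "b < p" "int p dvd int b * int m + int (m - r)"
    using lnr_prop[OF p assms(4) pm, of "m - r"] by (auto simp: b_def)
  have da: "p dvd a * m + r"
  proof -
    have "int p dvd int (a * m + r)" using ha(2) by simp
    then show ?thesis by (simp only: int_dvd_int_iff)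
  qed
  have db: "p dvd b * m + (m - r)"
  proof -
    have "int p dvd int (b * m + (m - r))" using hb(2) by simp
    then show ?thesis by (simp only: int_dvd_int_iff)
  qed
  have "p dvd (a * m + r) + (b * m + (m - r))" using da db by simp
  also have "(a * m + r) + (b * m + (m - r)) = (a + b + 1) * m" using rm by (simp add: algebra_simps)
  finally have "p dvd (a + b + 1) * m" .
  hence "p dvd (a + b + 1)" using p pm prime_dvd_mult_iff by blast
  then obtain k where k: "a + b + 1 = p * k" by (auto elim: dvdE)
  have "k \<noteq> 0"
  proof
    assume "k = 0" with k show False by simp
  qed
  moreover have "p * k < p * 2"
  proof -
    have "p * k = a + b + 1" using k by simp
    also have "\<dots> < p * 2" using ha(1) hb(1) by simp
    finally show ?thesis .
  qed
  hence "k < 2" using p0 by simp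
  ultimately have "k = 1" by simp
  hence ab: "a + b + 1 = p" using k by simp
  have as: "a + s \<le> p - 1" using assms(7) ab by (simp add: b_def[symmetric])
  define SS where "SS = (\<Sum>k<p - s. (qpoch (qvar ^ r) (qvar ^ m) k * qpoch (qvar ^ (m - r)) (qvar ^ m) (k + s))
                     / (qpoch (qvar ^ m) (qvar ^ m) k * qpoch (qvar ^ m) (qvar ^ m) (k + s)))"
  define F where "F = m * a * (a + 1) div 2"
  have FI: "int m * int a * (int a + 1) div 2 = int F"
  proof -
    have "int F = int (m * a * (a + 1)) div int 2" unfolding F_def by (rule zdiv_int)
    also have "int (m * a * (a + 1)) = int m * int a * (int a + 1)" by (simp add: algebra_simps)
    finally show ?thesis by simp
  qed
  have K: "RV z SS ((-1) ^ a * inverse (z ^ F))" if "z ^ p = 1" "z \<noteq> 1" for z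
    unfolding SS_def F_def by (rule keyz[OF p pm that as da rm])
  have z0: "z \<noteq> 0" if "z ^ p = 1" for z :: complex using that p0 by (auto simp: power_0_left)
  have RB: "RV z ((-1) ^ a * qvar powi e) ((-1) ^ a * z powi e)" if "z ^ p = 1" for z e
    by (intro RV_mult RV_power RV_minus RV_1 RV_powi RV_qvar z0 that)
  have part1: "qcong SS ((-1) ^ a * qvar powi (- (int m * int a * (int a + 1) div 2))) (qint p) 1"
  proof (rule qcong_via_roots[OF p0])
    fix z :: complex assume z: "z ^ p = 1" "z \<noteq> 1"
    have "z powi (- (int m * int a * (int a + 1) div 2)) = inverse (z ^ F)"
      unfolding FI by (simp add: power_int_minus)
    then show "\<exists>x y. RV z SS x \<and> RV z ((-1) ^ a * qvar powi (- (int m * int a * (int a + 1) div 2))) y \<and> x = y"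
      using K[OF z] RB[OF z(1)] by metis
  qed
  have part2: "qcong SS ((-1) ^ a * qvar powi ((int r * int (m - r) * (1 - int p ^ 2)) div (2 * int m))) (qint p) 1"
    if hm: "m dvd (p - 1) \<or> m dvd (p + 1)"
  proof (rule qcong_via_roots[OF p0])
    fix z :: complex assume z: "z ^ p = 1" "z \<noteq> 1"
    have imr: "int (m - r) = int m - int r" using rm by simp
    have P2: "\<not> int p dvd 2"
    proof
      assume "int p dvd 2"
      hence "p dvd 2" by (metis int_dvd_int_iff of_nat_numeral)
      hence "p \<le> 2" by (rule dvd_imp_le) simp
      hence "p = 2" using prime_ge_2_nat[OF p] by simp
      thus False using assms(2) by simp
    qed
    have dvd: "int p dvd (int r * int (m - r) * (1 - int p ^ 2)) div (2 * int m)
                  - (- (int m * int a * (int a + 1) div 2))"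
      unfolding imr
      by (rule arith2) (use ha(2) p pm P2 div2m[OF assms(2) hm p0, of r] assms(4) in
                         \<open>simp_all add: ac_simps\<close>)
    have "z powi ((int r * int (m - r) * (1 - int p ^ 2)) div (2 * int m))
          = z powi (- (int m * int a * (int a + 1) div 2))"
      by (rule powi_cong[OF z(1) z0[OF z(1)] dvd])
    also have "\<dots> = inverse (z ^ F)"
      unfolding FI by (simp add: power_int_minus)
    finally have e: "z powi ((int r * int (m - r) * (1 - int p ^ 2)) div (2 * int m)) = inverse (z ^ F)" .
    show "\<exists>x y. RV z SS x \<and> RV z ((-1) ^ a * qvar powi ((int r * int (m - r) * (1 - int p ^ 2)) div (2 * int m))) y \<and> x = y"
      using K[OF z] RB[OF z(1)] e by metis
  qed
  show ?thesis using part1 part2 unfolding SS_def a_def by blast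
qed


end
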